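(* Let $H$ be a separable infinite-dimensional Hilbert space with a fixed orthonormal basis $(e_i)_{i\in\mathbb{N}}$, and let $\mathcal{L}_2$ be the Hilbert–Schmidt operators on $H$, identified with their matrices in this basis. Let $A=(a_{ij})_{i,j\in\mathbb{N}}$ be a Schur multiplier of $\mathcal{L}_2$ such that the map $S_A\colon\mathcal{L}_2\to\mathcal{L}_2$, $S_A(x)=A\circ x$, is injective. Then $S_A(xy)=S_A(x)S_A(y)$ for all $x,y\in\mathcal{L}_2$ if and only if $a_{ij}=f(i)/f(j)$ for all $i,j$, for some sequence $f\colon\mathbb{N}\to\mathbb{C}$ that is bounded and bounded away from zero.
   Context: $\mathcal{L}_2=\{x\in B(H): \tau(|x|^2)<\infty\}$, where $\tau$ is the canonical trace. $A\circ x$ denotes the entrywise product of the matrix $A$ with the matrix of $x$ in the fixed basis. A Schur multiplier of $\mathcal{L}_2$ is an infinite matrix $A$ such that $A\circ x\in\mathcal{L}_2$ for every $x\in\mathcal{L}_2$; these are exactly the matrices with uniformly bounded entries. *)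

theory Defs
  imports "HOL-Analysis.Analysis"
begin

text \<open>Operators on H are identified with their matrices in the fixed orthonormal
basis (e_i), i.e. with functions nat => nat => complex.  The Hilbert-Schmidt
class L2 = {x : tau(|x|^2) < infinity} corresponds to the square-summable
matrices, since tau(x* x) = sum_{i,j} |x_ij|^2.\<close>

type_synonym cmat = "nat \<Rightarrow> nat \<Rightarrow> complex"

definition HS :: "cmat set" where
  "HS = {x. (\<lambda>(i, j). (cmod (x i j))\<^sup>2) summable_on (UNIV :: (nat \<times> nat) set)}"

text \<open>Matrix of the operator product xy (absolutely convergent for x, y in HS).\<close>
definition mat_mult :: "cmat \<Rightarrow> cmat \<Rightarrow> cmat" where
  "mat_mult x y = (\<lambda>i j. \<Sum>\<^sub>\<infinity>k. x i k * y k j)"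

definition schur :: "cmat \<Rightarrow> cmat \<Rightarrow> cmat" where
  "schur A x = (\<lambda>i j. A i j * x i j)"

definition schur_multiplier_L2 :: "cmat \<Rightarrow> bool" where
  "schur_multiplier_L2 A \<longleftrightarrow> (\<forall>x\<in>HS. schur A x \<in> HS)"

end

theory Submission
  imports Defs
begin

lemma infsum_single_pt: "(\<Sum>\<^sub>\<infinity>l. (if l = k then c else 0::complex)) = c"
proof -
  have "(\<Sum>\<^sub>\<infinity>l. (if l = k then c else 0::complex)) = (\<Sum>\<^sub>\<infinity>l\<in>{k}. (if l = k then c else 0::complex))"
    by (rule infsum_cong_neutral) auto
  then show ?thesis by simp
qed

lemma col_HS:
  "(\<lambda>a b. if b = c then v a else 0) \<in> HS \<longleftrightarrow> (\<lambda>i. (cmod (v i))\<^sup>2) summable_on UNIV"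
proof -
  let ?F = "\<lambda>(i, j). (cmod ((\<lambda>a b. if b = c then v a else 0) i j))\<^sup>2"
  have "?F summable_on UNIV \<longleftrightarrow> ?F summable_on ((\<lambda>i. (i, c)) ` UNIV)"
    by (rule summable_on_cong_neutral) auto
  also have "\<dots> \<longleftrightarrow> (?F \<circ> (\<lambda>i. (i, c))) summable_on UNIV"
    by (rule summable_on_reindex) (auto simp: inj_on_def)
  also have "?F \<circ> (\<lambda>i. (i, c)) = (\<lambda>i. (cmod (v i))\<^sup>2)" by auto
  finally show ?thesis by (simp add: HS_def)
qed

lemma row_HS:
  "(\<lambda>a b. if a = c then v b else 0) \<in> HS \<longleftrightarrow> (\<lambda>i. (cmod (v i))\<^sup>2) summable_on UNIV"
proof -
  let ?F = "\<lambda>(i, j). (cmod ((\<lambda>a b. if a = c then v b else 0) i j))\<^sup>2"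
  have "?F summable_on UNIV \<longleftrightarrow> ?F summable_on ((\<lambda>i. (c, i)) ` UNIV)"
    by (rule summable_on_cong_neutral) auto
  also have "\<dots> \<longleftrightarrow> (?F \<circ> (\<lambda>i. (c, i))) summable_on UNIV"
    by (rule summable_on_reindex) (auto simp: inj_on_def)
  also have "?F \<circ> (\<lambda>i. (c, i)) = (\<lambda>i. (cmod (v i))\<^sup>2)" by auto
  finally show ?thesis by (simp add: HS_def)
qed

lemma unit_HS: "(\<lambda>a b. if a = i \<and> b = j then p else 0) \<in> HS"
proof -
  let ?F = "\<lambda>(a, b). (cmod ((\<lambda>a b. if a = i \<and> b = j then p else 0) a b))\<^sup>2"
  have "?F summable_on UNIV \<longleftrightarrow> ?F summable_on {(i,j)}"
    by (rule summable_on_cong_neutral) (auto split: if_splits)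
  then show ?thesis by (simp add: HS_def)
qed

lemma unit_mult:
  "mat_mult (\<lambda>a b. if a = i \<and> b = k then p else 0) (\<lambda>a b. if a = k \<and> b = j then q else 0) i j = p * q"
proof -
  have "(\<lambda>l. (if i = i \<and> l = k then p else 0) * (if l = k \<and> j = j then q else 0)) = (\<lambda>l. if l = k then p * q else 0)"
    by auto
  then show ?thesis by (simp add: mat_mult_def infsum_single_pt)
qed

lemma seq_bounded:
  fixes g :: "nat \<Rightarrow> complex"
  assumes H: "\<And>v. (\<lambda>i. (cmod (v i))\<^sup>2) summable_on UNIV \<Longrightarrow> (\<lambda>i. (cmod (g i * v i))\<^sup>2) summable_on UNIV"
  shows "\<exists>M. \<forall>i. cmod (g i) \<le> M"
proof (rule ccontr)
  assume nb: "\<not> (\<exists>M. \<forall>i. cmod (g i) \<le> M)"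
  have inf: "\<exists>i>N. cmod (g i) > M" for N M
  proof (rule ccontr)
    assume "\<not> ?thesis"
    then have "\<forall>i>N. cmod (g i) \<le> M" by auto
    then have "\<forall>i. cmod (g i) \<le> max M (Max ((\<lambda>i. cmod (g i)) ` {..N}))"
    proof (intro allI)
      fix i
      show "cmod (g i) \<le> max M (Max ((\<lambda>i. cmod (g i)) ` {..N}))"
      proof (cases "i \<le> N")
        case True
        then have "cmod (g i) \<le> Max ((\<lambda>i. cmod (g i)) ` {..N})" by (intro Max_ge) auto
        then show ?thesis by linarith
      next
        case False
        then have "cmod (g i) \<le> M" using \<open>\<forall>i>N. cmod (g i) \<le> M\<close> by simp
        then show ?thesis by linarith
      qed
    qed
    with nb show False by blast
  qed
  define n where "n = rec_nat (SOME i. cmod (g i) > 1) (\<lambda>k m. SOME i. i > m \<and> cmod (g i) > 2 ^ Suc k)"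
  have n0: "n 0 = (SOME i. cmod (g i) > 1)" and nS: "\<And>k. n (Suc k) = (SOME i. i > n k \<and> cmod (g i) > 2 ^ Suc k)"
    by (simp_all add: n_def)
  have big: "cmod (g (n k)) > 2 ^ k" for k
  proof (cases k)
    case 0
    have "\<exists>i. cmod (g i) > 1" using inf[of 0 1] by blast
    then have "cmod (g (SOME i. cmod (g i) > 1)) > 1" by (rule someI_ex)
    then show ?thesis using 0 by (simp add: n0)
  next
    case (Suc m)
    have "\<exists>i. i > n m \<and> cmod (g i) > 2 ^ Suc m" using inf[of "n m" "2 ^ Suc m"] by blast
    then have "(\<lambda>i. i > n m \<and> cmod (g i) > 2 ^ Suc m) (SOME i. i > n m \<and> cmod (g i) > 2 ^ Suc m)" by (rule someI_ex)
    then show ?thesis using Suc by (simp add: nS)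
  qed
  have incr: "n k < n (Suc k)" for k
  proof -
    have "\<exists>i. i > n k \<and> cmod (g i) > 2 ^ Suc k" using inf[of "n k" "2 ^ Suc k"] by blast
    then have "(\<lambda>i. i > n k \<and> cmod (g i) > 2 ^ Suc k) (SOME i. i > n k \<and> cmod (g i) > 2 ^ Suc k)" by (rule someI_ex)
    then show ?thesis by (simp add: nS)
  qed
  then have sm: "strict_mono n" by (simp add: strict_mono_Suc_iff)
  then have injn: "inj n" by (rule strict_mono_imp_inj_on)
  have gnz: "g (n k) \<noteq> 0" for k
  proof
    assume "g (n k) = 0"
    then have "cmod (g (n k)) = 0" by simp
    then show False using big[of k] by (metis not_less_iff_gr_or_eq zero_less_numeral zero_less_power order_less_trans)
  qed
  define v where "v i = (if i \<in> range n then 1 / g i else 0)" for i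
  have "(\<lambda>i. (cmod (v i))\<^sup>2) summable_on UNIV"
  proof -
    let ?F = "\<lambda>i. (cmod (v i))\<^sup>2"
    have "?F summable_on UNIV \<longleftrightarrow> ?F summable_on range n"
      by (rule summable_on_cong_neutral) (auto simp: v_def)
    also have "\<dots> \<longleftrightarrow> (?F \<circ> n) summable_on UNIV"
      by (rule summable_on_reindex[OF injn])
    also have "\<dots>"
    proof (rule summable_on_comparison_test)
      show "(\<lambda>k. (1/2::real) ^ k) summable_on UNIV"
        by (subst summable_on_UNIV_nonneg_real_iff) (auto intro: summable_geometric)
      fix k :: nat
      have "cmod (v (n k)) = 1 / cmod (g (n k))" by (simp add: v_def norm_divide)
      also have "\<dots> \<le> 1 / 2 ^ k" using big[of k] by (intro frac_le) auto
      finally have a: "cmod (v (n k)) \<le> 1 / 2 ^ k" .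
      have "1 / 2 ^ k \<le> (1::real)" by simp
      with a have b: "cmod (v (n k)) \<le> 1" by linarith
      have "(cmod (v (n k)))\<^sup>2 \<le> cmod (v (n k))"
        using b by (simp add: power2_eq_square mult_left_le)
      also have "\<dots> \<le> (1/2) ^ k" using a by (simp add: power_one_over)
      finally show "(?F \<circ> n) k \<le> (1/2) ^ k" by simp
      show "0 \<le> (?F \<circ> n) k" by simp
    qed
    finally show ?thesis .
  qed
  then have S1: "(\<lambda>i. (cmod (g i * v i))\<^sup>2) summable_on UNIV" by (rule H)
  let ?G = "\<lambda>i. (cmod (g i * v i))\<^sup>2"
  have e1: "?G summable_on UNIV \<longleftrightarrow> ?G summable_on range n"
    by (rule summable_on_cong_neutral) (simp_all add: v_def)
  have e2: "?G summable_on range n \<longleftrightarrow> (?G \<circ> n) summable_on UNIV"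
    by (rule summable_on_reindex[OF injn])
  have e3: "?G \<circ> n = (\<lambda>_::nat. 1::real)"
  proof
    fix k
    have "v (n k) = 1 / g (n k)" by (simp add: v_def)
    then show "(?G \<circ> n) k = 1" using gnz[of k] by simp
  qed
  have e4: "(\<lambda>_::nat. 1::real) summable_on UNIV \<longleftrightarrow> summable (\<lambda>_::nat. 1::real)"
    by (rule summable_on_UNIV_nonneg_real_iff) simp
  have "summable (\<lambda>_::nat. 1::real)" using S1 e1 e2 e3 e4 by simp
  then have "(\<lambda>_::nat. 1::real) \<longlonglongrightarrow> 0" by (rule summable_LIMSEQ_zero)
  then have "(1::real) = 0" by (rule LIMSEQ_const_iff[THEN iffD1])
  then show False by simp
qed


theorem proposition4p1:
  fixes A :: cmat
  assumes "schur_multiplier_L2 A"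
    and "inj_on (schur A) HS"
  shows "(\<forall>x\<in>HS. \<forall>y\<in>HS. schur A (mat_mult x y) = mat_mult (schur A x) (schur A y))
     \<longleftrightarrow> (\<exists>f :: nat \<Rightarrow> complex.
            (\<exists>M. \<forall>i. cmod (f i) \<le> M) \<and> (\<exists>c>0. \<forall>i. c \<le> cmod (f i)) \<and>
            (\<forall>i j. A i j = f i / f j))"
proof
  assume mult: "\<forall>x\<in>HS. \<forall>y\<in>HS. schur A (mat_mult x y) = mat_mult (schur A x) (schur A y)"
  define E :: "nat \<Rightarrow> nat \<Rightarrow> complex \<Rightarrow> cmat" where "E i j p = (\<lambda>a b. if a = i \<and> b = j then p else (0::complex))" for i j p
  have EHS: "E i j p \<in> HS" for i j p unfolding E_def by (rule unit_HS)
  have sE: "schur A (E i j 1) = E i j (A i j)" for i j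
    by (auto simp: E_def schur_def intro!: ext)
  have tri: "A i j = A i k * A k j" for i j k
  proof -
    have "A i j = schur A (mat_mult (E i k 1) (E k j 1)) i j"
      using unit_mult[of i k 1 j 1] by (simp add: schur_def E_def)
    also have "\<dots> = mat_mult (E i k (A i k)) (E k j (A k j)) i j"
      using mult EHS sE by simp
    also have "\<dots> = A i k * A k j" unfolding E_def by (rule unit_mult)
    finally show ?thesis .
  qed
  have diag: "A i i = 1" for i
  proof -
    have "A i i \<noteq> 0"
    proof
      assume "A i i = 0"
      then have "schur A (E i i 1) = schur A (\<lambda>_ _. 0)"
        by (auto simp: E_def schur_def intro!: ext)
      moreover have "(\<lambda>_ _. 0::complex) \<in> HS" by (simp add: HS_def case_prod_unfold)
      ultimately have "E i i 1 = (\<lambda>_ _. 0)" using inj_onD[OF assms(2)] EHS by blast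
      then have "E i i 1 i i = 0" by simp
      then show False by (simp add: E_def)
    qed
    moreover have "A i i = A i i * A i i" by (rule tri)
    ultimately show ?thesis by simp
  qed
  have col: "\<exists>M. \<forall>i. cmod (A i 0) \<le> M"
  proof (rule seq_bounded)
    fix v :: "nat \<Rightarrow> complex" assume "(\<lambda>i. (cmod (v i))\<^sup>2) summable_on UNIV"
    then have "(\<lambda>a b. if b = 0 then v a else 0) \<in> HS" by (simp add: col_HS)
    then have "schur A (\<lambda>a b. if b = 0 then v a else 0) \<in> HS" using assms(1) by (simp add: schur_multiplier_L2_def)
    moreover have "schur A (\<lambda>a b. if b = 0 then v a else 0) = (\<lambda>a b. if b = 0 then A a 0 * v a else 0)"
      by (auto simp: schur_def intro!: ext)
    ultimately show "(\<lambda>i. (cmod (A i 0 * v i))\<^sup>2) summable_on UNIV" by (simp add: col_HS)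
  qed
  have row: "\<exists>M. \<forall>i. cmod (A 0 i) \<le> M"
  proof (rule seq_bounded)
    fix v :: "nat \<Rightarrow> complex" assume "(\<lambda>i. (cmod (v i))\<^sup>2) summable_on UNIV"
    then have "(\<lambda>a b. if a = 0 then v b else 0) \<in> HS" by (simp add: row_HS)
    then have "schur A (\<lambda>a b. if a = 0 then v b else 0) \<in> HS" using assms(1) by (simp add: schur_multiplier_L2_def)
    moreover have "schur A (\<lambda>a b. if a = 0 then v b else 0) = (\<lambda>a b. if a = 0 then A 0 b * v b else 0)"
      by (auto simp: schur_def intro!: ext)
    ultimately show "(\<lambda>i. (cmod (A 0 i * v i))\<^sup>2) summable_on UNIV" by (simp add: row_HS)
  qed
  have inv: "A 0 j * A j 0 = 1" for j using tri[of 0 0 j] diag[of 0] by simp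
  obtain M1 where M1: "\<forall>i. cmod (A i 0) \<le> M1" using col by blast
  obtain M2 where M2: "\<forall>i. cmod (A 0 i) \<le> M2" using row by blast
  have "cmod (A 0 0) \<le> M2" using M2 by blast
  then have M2pos: "M2 > 0" using diag[of 0] by simp
  show "\<exists>f :: nat \<Rightarrow> complex.
            (\<exists>M. \<forall>i. cmod (f i) \<le> M) \<and> (\<exists>c>0. \<forall>i. c \<le> cmod (f i)) \<and>
            (\<forall>i j. A i j = f i / f j)"
  proof (intro exI conjI)
    show "\<forall>i. cmod (A i 0) \<le> M1" by (rule M1)
    show "1 / M2 > 0" using M2pos by simp
    show "\<forall>i. 1 / M2 \<le> cmod (A i 0)"
    proof
      fix i
      have "cmod (A 0 i) * cmod (A i 0) = 1" using inv[of i] by (metis norm_mult norm_one)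
      moreover have "cmod (A 0 i) * cmod (A i 0) \<le> M2 * cmod (A i 0)"
        using M2 by (intro mult_right_mono) auto
      ultimately have "1 \<le> M2 * cmod (A i 0)" by simp
      then show "1 / M2 \<le> cmod (A i 0)" using M2pos by (simp add: divide_le_eq mult.commute)
    qed
    show "\<forall>i j. A i j = A i 0 / A j 0"
    proof (intro allI)
      fix i j
      have "A j 0 \<noteq> 0" using inv[of j] by auto
      then have "A 0 j = 1 / A j 0" using inv[of j] by (simp add: eq_divide_eq)
      then show "A i j = A i 0 / A j 0" using tri[of i j 0] by simp
    qed
  qed
next
  assume "\<exists>f :: nat \<Rightarrow> complex.
            (\<exists>M. \<forall>i. cmod (f i) \<le> M) \<and> (\<exists>c>0. \<forall>i. c \<le> cmod (f i)) \<and>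
            (\<forall>i j. A i j = f i / f j)"
  then obtain f c where c: "c > 0" "\<forall>i. c \<le> cmod (f i)" and Af: "\<forall>i j. A i j = f i / f j" by blast
  have fnz: "f i \<noteq> 0" for i using c by (metis norm_zero not_le)
  show "\<forall>x\<in>HS. \<forall>y\<in>HS. schur A (mat_mult x y) = mat_mult (schur A x) (schur A y)"
  proof (intro ballI ext)
    fix x y i j
    have "(\<lambda>k. A i k * x i k * (A k j * y k j)) = (\<lambda>k. (f i / f j) * (x i k * y k j))"
      using fnz by (auto simp: Af field_simps)
    then have "mat_mult (schur A x) (schur A y) i j = (\<Sum>\<^sub>\<infinity>k. (f i / f j) * (x i k * y k j))"
      by (simp add: schur_def mat_mult_def)
    also have "\<dots> = (f i / f j) * (\<Sum>\<^sub>\<infinity>k. x i k * y k j)" by (rule infsum_cmult_right')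
    finally show "schur A (mat_mult x y) i j = mat_mult (schur A x) (schur A y) i j"
      by (simp add: schur_def mat_mult_def Af)
  qed
qed

end
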